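(* For every positive integer $\ell$, there exists a tree $T$ such that $\gamma_t(T)-\chi_{\mu_2}(T)=\ell$.
   Context: $\gamma_t(T)$ is the total domination number: the minimum size of a set $D$ such that every vertex has a neighbor in $D$. A set $M\subseteq V(G)$ is a $2$-distance mutual-visibility set if for every two vertices $u,v\in M$ there exists a shortest $u,v$-path of length at most $2$ none of whose internal vertices lies in $M$. $\chi_{\mu_2}(G)$ is the minimum cardinality of a partition of $V(G)$ into $2$-distance mutual-visibility sets. *)

theory Defs
  imports Main
begin

type_synonym 'a graph = "'a set \<times> 'a set set"

definition verts :: "'a graph \<Rightarrow> 'a set" where "verts G = fst G"
definition edges :: "'a graph \<Rightarrow> 'a set set" where "edges G = snd G"

definition simple_graph :: "'a graph \<Rightarrow> bool" where
  "simple_graph G \<longleftrightarrow> finite (verts G) \<and>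
     (\<forall>e\<in>edges G. \<exists>u v. e = {u, v} \<and> u \<noteq> v \<and> u \<in> verts G \<and> v \<in> verts G)"

definition adj :: "'a graph \<Rightarrow> 'a \<Rightarrow> 'a \<Rightarrow> bool" where
  "adj G u v \<longleftrightarrow> {u, v} \<in> edges G \<and> u \<noteq> v"

definition is_path :: "'a graph \<Rightarrow> 'a list \<Rightarrow> bool" where
  "is_path G xs \<longleftrightarrow> xs \<noteq> [] \<and> distinct xs \<and> set xs \<subseteq> verts G \<and>
     (\<forall>i. Suc i < length xs \<longrightarrow> adj G (xs ! i) (xs ! Suc i))"

definition path_betw :: "'a graph \<Rightarrow> 'a \<Rightarrow> 'a \<Rightarrow> 'a list \<Rightarrow> bool" where
  "path_betw G u v xs \<longleftrightarrow> is_path G xs \<and> hd xs = u \<and> last xs = v"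

definition path_len :: "'a list \<Rightarrow> nat" where "path_len xs = length xs - 1"

definition connected_graph :: "'a graph \<Rightarrow> bool" where
  "connected_graph G \<longleftrightarrow> (\<forall>u\<in>verts G. \<forall>v\<in>verts G. \<exists>xs. path_betw G u v xs)"

definition has_cycle :: "'a graph \<Rightarrow> bool" where
  "has_cycle G \<longleftrightarrow> (\<exists>xs. is_path G xs \<and> length xs \<ge> 3 \<and> adj G (last xs) (hd xs))"

definition is_tree :: "'a graph \<Rightarrow> bool" where
  "is_tree G \<longleftrightarrow> simple_graph G \<and> verts G \<noteq> {} \<and> connected_graph G \<and> \<not> has_cycle G"

definition gdist :: "'a graph \<Rightarrow> 'a \<Rightarrow> 'a \<Rightarrow> nat" where
  "gdist G u v = (LEAST n. \<exists>xs. path_betw G u v xs \<and> path_len xs = n)"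

definition shortest_path :: "'a graph \<Rightarrow> 'a \<Rightarrow> 'a \<Rightarrow> 'a list \<Rightarrow> bool" where
  "shortest_path G u v xs \<longleftrightarrow> path_betw G u v xs \<and> path_len xs = gdist G u v"

definition internal_verts :: "'a list \<Rightarrow> 'a set" where
  "internal_verts xs = set (butlast (tl xs))"

definition total_dominating :: "'a graph \<Rightarrow> 'a set \<Rightarrow> bool" where
  "total_dominating G D \<longleftrightarrow> D \<subseteq> verts G \<and> (\<forall>v\<in>verts G. \<exists>d\<in>D. adj G v d)"

definition total_domination_number :: "'a graph \<Rightarrow> nat" where
  "total_domination_number G = Min (card ` {D. total_dominating G D})"

definition dist2_mv_set :: "'a graph \<Rightarrow> 'a set \<Rightarrow> bool" where
  "dist2_mv_set G M \<longleftrightarrow> M \<subseteq> verts G \<and>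
     (\<forall>u\<in>M. \<forall>v\<in>M. \<exists>xs. shortest_path G u v xs \<and> path_len xs \<le> 2 \<and>
        internal_verts xs \<inter> M = {})"

definition is_partition_of :: "'a set set \<Rightarrow> 'a set \<Rightarrow> bool" where
  "is_partition_of P V \<longleftrightarrow> \<Union>P = V \<and> {} \<notin> P \<and>
     (\<forall>A\<in>P. \<forall>B\<in>P. A \<noteq> B \<longrightarrow> A \<inter> B = {})"

definition chi_mu2 :: "'a graph \<Rightarrow> nat" where
  "chi_mu2 G = Min (card ` {P. is_partition_of P (verts G) \<and> (\<forall>M\<in>P. dist2_mv_set G M)})"

end

theory Submission
  imports Defs
begin

lemma successively_nth:
  "successively P xs \<longleftrightarrow> (\<forall>i. Suc i < length xs \<longrightarrow> P (xs!i) (xs!Suc i))"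
proof (induction P xs rule: successively.induct)
  case (3 P x y xs)
  show ?case
  proof
    assume "successively P (x # y # xs)"
    then show "\<forall>i. Suc i < length (x # y # xs) \<longrightarrow> P ((x # y # xs) ! i) ((x # y # xs) ! Suc i)"
      using 3 by (auto simp: nth_Cons split: nat.splits)
  next
    assume h: "\<forall>i. Suc i < length (x # y # xs) \<longrightarrow> P ((x # y # xs) ! i) ((x # y # xs) ! Suc i)"
    have "P x y" using h[rule_format, of 0] by simp
    moreover have "\<forall>i. Suc i < length (y # xs) \<longrightarrow> P ((y # xs) ! i) ((y # xs) ! Suc i)"
      using h by (metis Suc_less_eq length_Cons nth_Cons_Suc)
    ultimately show "successively P (x # y # xs)" using 3 by simp
  qed
qed auto

lemma adj_sym: "adj G u v \<longleftrightarrow> adj G v u"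
  unfolding adj_def by (auto simp: insert_commute)

lemma is_path_succ:
  "is_path G xs \<longleftrightarrow> xs \<noteq> [] \<and> distinct xs \<and> set xs \<subseteq> verts G \<and> successively (adj G) xs"
  unfolding is_path_def successively_nth by simp

lemma path_rev: "path_betw G u v xs \<Longrightarrow> path_betw G v u (rev xs)"
  unfolding path_betw_def is_path_succ
  by (auto simp: hd_rev last_rev adj_sym[of G] cong: successively_cong)

lemma path_join:
  assumes "path_betw G u r xs" "path_betw G r v ys"
  shows "\<exists>zs. path_betw G u v zs"
proof -
  have "\<exists>x\<in>set xs. x \<in> set ys" using assms unfolding path_betw_def is_path_def
    by (metis last_in_set hd_in_set)
  then obtain xs1 w xs2 where xs: "xs = xs1 @ w # xs2" "w \<in> set ys" "\<forall>y\<in>set xs1. y \<notin> set ys"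
    using split_list_first_prop[of xs "\<lambda>x. x \<in> set ys"] by blast
  then obtain ys1 ys2 where ys: "ys = ys1 @ w # ys2" by (meson split_list)
  have "hd (xs1 @ w # ys2) = u" using assms(1) xs unfolding path_betw_def by (cases xs1) auto
  moreover have "last (xs1 @ w # ys2) = v" using assms(2) ys unfolding path_betw_def by auto
  moreover have "is_path G (xs1 @ w # ys2)"
    using assms xs ys unfolding path_betw_def is_path_succ
    by (auto simp: successively_append_iff successively_Cons)
  ultimately have "path_betw G u v (xs1 @ w # ys2)" unfolding path_betw_def by blast
  then show ?thesis by blast
qed

lemma path_short:
  assumes "path_betw G u v xs" "path_len xs \<le> 2"
  shows "(u = v \<and> xs = [u]) \<or> (adj G u v \<and> xs = [u, v]) \<or>
    (\<exists>w. adj G u w \<and> adj G w v \<and> xs = [u, w, v])"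
proof -
  have "xs \<noteq> []" using assms unfolding path_betw_def is_path_def by auto
  then have "length xs = 1 \<or> length xs = 2 \<or> length xs = 3" using assms(2) length_greater_0_conv[of xs] unfolding path_len_def by arith
  then show ?thesis
  proof (elim disjE)
    assume "length xs = 1"
    then obtain a where "xs = [a]" by (metis One_nat_def length_0_conv length_Suc_conv)
    then show ?thesis using assms unfolding path_betw_def by auto
  next
    assume "length xs = 2"
    then obtain a b where "xs = [a, b]" by (metis One_nat_def length_0_conv length_Suc_conv numeral_2_eq_2)
    then show ?thesis using assms unfolding path_betw_def is_path_succ by auto
  next
    assume "length xs = 3"
    then obtain a b c where "xs = [a, b, c]" by (metis length_0_conv length_Suc_conv numeral_3_eq_3)
    then show ?thesis using assms unfolding path_betw_def is_path_succ by auto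
  qed
qed

lemma mv_close:
  assumes "dist2_mv_set G M" "u \<in> M" "v \<in> M"
  shows "u = v \<or> adj G u v \<or> (\<exists>w. w \<notin> M \<and> adj G u w \<and> adj G w v)"
proof -
  obtain xs where "shortest_path G u v xs" "path_len xs \<le> 2" "internal_verts xs \<inter> M = {}"
    using assms unfolding dist2_mv_set_def by blast
  then show ?thesis using path_short[of G u v xs]
    unfolding shortest_path_def internal_verts_def by auto
qed

lemma gdist_eq:
  assumes "path_betw G u v xs" "\<And>ys. path_betw G u v ys \<Longrightarrow> path_len xs \<le> path_len ys"
  shows "gdist G u v = path_len xs"
  unfolding gdist_def by (rule Least_equality) (use assms in auto)

lemma mv_pair:
  assumes "u \<in> verts G" "v \<in> verts G"
    and "u = v \<or> adj G u v \<or> (\<not> adj G u v \<and> u \<noteq> v \<and> (\<exists>w. w \<notin> M \<and> adj G u w \<and> adj G w v \<and> w \<in> verts G))"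
  shows "\<exists>xs. shortest_path G u v xs \<and> path_len xs \<le> 2 \<and> internal_verts xs \<inter> M = {}"
  using assms(3)
proof (elim disjE)
  assume "u = v"
  have p: "path_betw G u v [u]" using assms \<open>u = v\<close> unfolding path_betw_def is_path_def by auto
  then have "gdist G u v = path_len [u]" by (intro gdist_eq) (auto simp: path_len_def)
  then show ?thesis using p by (intro exI[of _ "[u]"]) (auto simp: shortest_path_def path_len_def internal_verts_def)
next
  assume a: "adj G u v"
  have p: "path_betw G u v [u, v]" using assms a unfolding path_betw_def is_path_succ adj_def by auto
  have "gdist G u v = path_len [u, v]"
  proof (rule gdist_eq[OF p])
    fix ys assume "path_betw G u v ys"
    have "ys \<noteq> [u]"
    proof
      assume "ys = [u]"
      then have "u = v" using \<open>path_betw G u v ys\<close> unfolding path_betw_def by auto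
      then show False using a unfolding adj_def by auto
    qed
    moreover have "ys \<noteq> []" using \<open>path_betw G u v ys\<close> unfolding path_betw_def is_path_def by auto
    ultimately show "path_len [u, v] \<le> path_len ys" using \<open>path_betw G u v ys\<close>
      unfolding path_len_def path_betw_def
      by (cases ys) (auto, metis Suc_leI length_greater_0_conv)
  qed
  then show ?thesis using p by (intro exI[of _ "[u,v]"]) (auto simp: shortest_path_def path_len_def internal_verts_def)
next
  assume a: "\<not> adj G u v \<and> u \<noteq> v \<and> (\<exists>w. w \<notin> M \<and> adj G u w \<and> adj G w v \<and> w \<in> verts G)"
  then obtain w where w: "w \<notin> M" "adj G u w" "adj G w v" "w \<in> verts G" by blast
  have p: "path_betw G u v [u, w, v]" using assms a w unfolding path_betw_def is_path_succ adj_def by auto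
  have "gdist G u v = path_len [u, w, v]"
  proof (rule gdist_eq[OF p])
    fix ys assume ys: "path_betw G u v ys"
    show "path_len [u, w, v] \<le> path_len ys"
    proof (rule ccontr)
      assume c: "\<not> ?thesis"
      then have "path_len ys \<le> 2" by (simp add: path_len_def)
      then show False using path_short[OF ys] a c by (auto simp: path_len_def)
    qed
  qed
  then show ?thesis using p w by (intro exI[of _ "[u,w,v]"]) (auto simp: shortest_path_def path_len_def internal_verts_def)
qed

lemma no_cycle:
  assumes H: "\<And>u v. adj G u v \<Longrightarrow> (dep v = Suc (dep u) \<and> par v = u) \<or> (dep u = Suc (dep v) \<and> par u = v)"
  shows "\<not> has_cycle G"
proof
  assume "has_cycle G"
  then obtain xs where p: "is_path G xs" and len: "length xs \<ge> 3" and cl: "adj G (last xs) (hd xs)"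
    unfolding has_cycle_def by blast
  define n where "n = length xs"
  have ne: "xs \<noteq> []" using len by auto
  have dist: "distinct xs" using p unfolding is_path_def by auto
  have cyc: "adj G (xs!i) (xs!((i+1) mod n))" if "i < n" for i
  proof (cases "Suc i < n")
    case True
    have e: "(i+1) mod n = Suc i" using True by simp
    have "\<forall>i. Suc i < length xs \<longrightarrow> adj G (xs ! i) (xs ! Suc i)" using p unfolding is_path_def by blast
    then have "adj G (xs!i) (xs!Suc i)" using True n_def by blast
    then show ?thesis using e by simp
  next
    case False
    then have "i = n - 1" using that by auto
    then have "xs!i = last xs" "(i+1) mod n = 0" using ne that by (simp_all add: n_def last_conv_nth)
    then show ?thesis using cl ne by (simp add: hd_conv_nth)
  qed
  have fin: "finite (dep ` set xs)" "dep ` set xs \<noteq> {}" using ne by auto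
  obtain x where x: "x \<in> set xs" "dep x = Max (dep ` set xs)"
    using Max_in[OF fin] by auto
  then obtain m where m: "m < n" "xs!m = x" by (auto simp: n_def in_set_conv_nth)
  have mx: "dep (xs!j) \<le> dep (xs!m)" if "j < n" for j
  proof -
    have "dep (xs!j) \<in> dep ` set xs" using that by (simp add: n_def)
    then show ?thesis using Max_ge[OF fin(1)] x m by simp
  qed
  have key: "par (xs!m) = xs!j" if "j < n" "adj G (xs!m) (xs!j)" for j
    using H[OF that(2)] mx[OF that(1)] by auto
  define j1 where "j1 = (m+1) mod n"
  define j2 where "j2 = (m+n-1) mod n"
  have n3: "n \<ge> 3" using len n_def by auto
  have "(j2 + 1) mod n = m"
  proof (cases "m = 0")
    case True then show ?thesis using n3 by (simp add: j2_def)
  next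
    case False
    then have "m + n - 1 = (m - 1) + n" by auto
    then have "j2 = (m - 1 + n) mod n" by (simp only: j2_def)
    then have "j2 = m - 1" using m by simp
    then show ?thesis using m False by simp
  qed
  have j1n: "j1 < n" "j2 < n" using n3 by (auto simp: j1_def j2_def)
  have "adj G (xs!j2) (xs!m)" using cyc[OF j1n(2)] \<open>(j2 + 1) mod n = m\<close> by simp
  then have "par (xs!m) = xs!j2" using key[OF j1n(2)] adj_sym[of G "xs!j2" "xs!m"] by blast
  moreover have "par (xs!m) = xs!j1" using key[OF j1n(1)] cyc[OF m(1)] by (simp add: j1_def)
  ultimately have "j1 = j2" using dist j1n by (simp add: n_def nth_eq_iff_index_eq)
  moreover have "j1 \<noteq> j2"
  proof (cases "m = 0")
    case True
    have "j1 = 1" using n3 True by (simp add: j1_def)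
    moreover have "j2 = n - 1" using n3 True by (simp add: j2_def)
    ultimately show ?thesis using n3 by simp
  next
    case False
    then have "m + n - 1 = (m - 1) + n" by auto
    then have "j2 = (m - 1 + n) mod n" by (simp only: j2_def)
    then have "j2 = m - 1" using m by simp
    show ?thesis
    proof (cases "m + 1 < n")
      case True
      then have "j1 = m + 1" by (simp add: j1_def)
      then show ?thesis using \<open>j2 = m - 1\<close> by simp
    next
      case c: False
      then have "m + 1 = n" using m by simp
      then have "j1 = 0" by (simp add: j1_def)
      then show ?thesis using \<open>j2 = m - 1\<close> \<open>m + 1 = n\<close> n3 by simp
    qed
  qed
  ultimately show False by simp
qed

definition vA :: "nat \<Rightarrow> nat" where "vA i = 3*i+1"
definition vB :: "nat \<Rightarrow> nat" where "vB i = 3*i+2"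
definition vX :: "nat \<Rightarrow> nat" where "vX i = 3*i+3"

lemma v_inj[simp]:
  "vA i = vA j \<longleftrightarrow> i = j" "vB i = vB j \<longleftrightarrow> i = j" "vX i = vX j \<longleftrightarrow> i = j"
  "vA i \<noteq> vB j" "vB j \<noteq> vA i" "vA i \<noteq> vX j" "vX j \<noteq> vA i" "vB i \<noteq> vX j" "vX j \<noteq> vB i"
  "vA i \<noteq> 0" "vB i \<noteq> 0" "vX i \<noteq> 0" "0 \<noteq> vA i" "0 \<noteq> vB i" "0 \<noteq> vX i"
  unfolding vA_def vB_def vX_def by presburger+

lemma v_pos[simp]: "0 < vA i" "0 < vB i" "0 < vX i"
  unfolding vA_def vB_def vX_def by simp_all

definition Vs :: "nat \<Rightarrow> nat set" where
  "Vs k = insert 0 (vA ` {..<k} \<union> vB ` {..<k} \<union> vX ` {..<k})"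
definition Es :: "nat \<Rightarrow> nat set set" where
  "Es k = (\<lambda>i. {0, vA i}) ` {..<k} \<union> (\<lambda>i. {vA i, vB i}) ` {..<k} \<union> (\<lambda>i. {vB i, vX i}) ` {..<k}"
definition Tr :: "nat \<Rightarrow> nat graph" where "Tr k = (Vs k, Es k)"

lemma verts_Tr: "verts (Tr k) = Vs k" by (simp add: Tr_def verts_def)

lemma adj_Tr: "adj (Tr k) u v \<longleftrightarrow> (\<exists>i<k. (u = 0 \<and> v = vA i) \<or> (u = vA i \<and> v = 0) \<or>
   (u = vA i \<and> v = vB i) \<or> (u = vB i \<and> v = vA i) \<or> (u = vB i \<and> v = vX i) \<or> (u = vX i \<and> v = vB i))"
  unfolding adj_def Tr_def edges_def Es_def by (auto simp: doubleton_eq_iff)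

lemma adj_X: "i < k \<Longrightarrow> adj (Tr k) (vX i) w \<longleftrightarrow> w = vB i"
  unfolding adj_Tr by auto
lemma adj_B: "i < k \<Longrightarrow> adj (Tr k) (vB i) w \<longleftrightarrow> w = vA i \<or> w = vX i"
  unfolding adj_Tr by auto
lemma adj_A: "i < k \<Longrightarrow> adj (Tr k) (vA i) w \<longleftrightarrow> w = 0 \<or> w = vB i"
  unfolding adj_Tr by auto
lemma adj_0: "adj (Tr k) 0 w \<longleftrightarrow> (\<exists>j<k. w = vA j)"
  unfolding adj_Tr by auto

lemma simple_Tr: "simple_graph (Tr k)"
proof -
  have e: "\<exists>u v. e = {u, v} \<and> u \<noteq> v \<and> u \<in> Vs k \<and> v \<in> Vs k" if "e \<in> Es k" for e
  proof -
    from that obtain i where i: "i < k" "e = {0, vA i} \<or> e = {vA i, vB i} \<or> e = {vB i, vX i}"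
      unfolding Es_def by blast
    then show ?thesis
    proof (elim conjE disjE)
      assume "e = {0, vA i}" then show ?thesis
        by (intro exI[of _ 0] exI[of _ "vA i"]) (auto simp: Vs_def i)
    next
      assume "e = {vA i, vB i}" then show ?thesis
        by (intro exI[of _ "vA i"] exI[of _ "vB i"]) (auto simp: Vs_def i)
    next
      assume "e = {vB i, vX i}" then show ?thesis
        by (intro exI[of _ "vB i"] exI[of _ "vX i"]) (auto simp: Vs_def i)
    qed
  qed
  show ?thesis unfolding simple_graph_def verts_Tr using e
    by (auto simp: Tr_def edges_def Vs_def)
qed

definition dep :: "nat \<Rightarrow> nat" where "dep v = (if v = 0 then 0 else (v - 1) mod 3 + 1)"
definition par :: "nat \<Rightarrow> nat" where "par v = (if (v - 1) mod 3 = 0 then 0 else v - 1)"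

lemma dep_par: "dep (vA i) = 1" "par (vA i) = 0" "dep (vB i) = 2" "par (vB i) = vA i"
  "dep (vX i) = 3" "par (vX i) = vB i" "dep 0 = 0"
  unfolding dep_def par_def vA_def vB_def vX_def by (simp_all add: mod_Suc)

lemma acyclic_Tr: "\<not> has_cycle (Tr k)"
  by (rule no_cycle[where dep = dep and par = par]) (auto simp: adj_Tr dep_par)

lemma path_to_0: "v \<in> Vs k \<Longrightarrow> \<exists>xs. path_betw (Tr k) v 0 xs"
proof -
  assume "v \<in> Vs k"
  then consider "v = 0" | i where "i < k" "v = vA i" | i where "i < k" "v = vB i"
    | i where "i < k" "v = vX i" unfolding Vs_def by auto
  then show ?thesis
  proof cases
    case 1 then show ?thesis
      by (intro exI[of _ "[0]"]) (auto simp: path_betw_def is_path_succ verts_Tr Vs_def)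
  next
    case (2 i) then show ?thesis
      by (intro exI[of _ "[vA i, 0]"]) (auto simp: path_betw_def is_path_succ verts_Tr Vs_def adj_A adj_B adj_X)
  next
    case (3 i) then show ?thesis
      by (intro exI[of _ "[vB i, vA i, 0]"]) (auto simp: path_betw_def is_path_succ verts_Tr Vs_def adj_A adj_B adj_X)
  next
    case (4 i) then show ?thesis
      by (intro exI[of _ "[vX i, vB i, vA i, 0]"]) (auto simp: path_betw_def is_path_succ verts_Tr Vs_def adj_A adj_B adj_X)
  qed
qed

lemma tree_Tr: "is_tree (Tr k)"
  unfolding is_tree_def connected_graph_def
proof (intro conjI ballI)
  show "verts (Tr k) \<noteq> {}" by (simp add: verts_Tr Vs_def)
  fix u v assume "u \<in> verts (Tr k)" "v \<in> verts (Tr k)"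
  then obtain xs ys where p1: "path_betw (Tr k) u 0 xs" and p2: "path_betw (Tr k) v 0 ys"
    using path_to_0 by (metis verts_Tr)
  show "\<exists>xs. path_betw (Tr k) u v xs" by (rule path_join[OF p1 path_rev[OF p2]])
qed (use simple_Tr acyclic_Tr in auto)

lemma finite_Vs: "finite (Vs k)" by (simp add: Vs_def)

lemma td_lower:
  assumes td: "total_dominating (Tr k) D"
  shows "2 * k \<le> card D"
proof -
  have DV: "D \<subseteq> Vs k" and dom: "\<And>v. v \<in> Vs k \<Longrightarrow> \<exists>d\<in>D. adj (Tr k) v d"
    using td unfolding total_dominating_def verts_Tr by auto
  have finD: "finite D" using DV finite_Vs finite_subset by blast
  have B: "vB i \<in> D" if "i < k" for i
  proof -
    have "vX i \<in> Vs k" using that by (simp add: Vs_def)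
    then obtain d where "d \<in> D" "adj (Tr k) (vX i) d" using dom by blast
    then show ?thesis using adj_X[OF that] by simp
  qed
  define f where "f i = (if vA i \<in> D then vA i else vX i)" for i
  have F: "f i \<in> D" if "i < k" for i
  proof -
    have "vB i \<in> Vs k" using that by (simp add: Vs_def)
    then obtain d where "d \<in> D" "adj (Tr k) (vB i) d" using dom by blast
    then show ?thesis using adj_B[OF that] by (auto simp: f_def)
  qed
  have injf: "inj_on f {..<k}"
    by (rule inj_onI) (auto simp: f_def split: if_splits)
  have injB: "inj_on vB {..<k}" by (rule inj_onI) simp
  have disj: "vB ` {..<k} \<inter> f ` {..<k} = {}" by (auto simp: f_def)
  have "card (vB ` {..<k} \<union> f ` {..<k}) = k + k"
    using card_Un_disjoint[OF _ _ disj] card_image[OF injf] card_image[OF injB] by simp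
  moreover have "vB ` {..<k} \<union> f ` {..<k} \<subseteq> D" using B F by auto
  ultimately show ?thesis using card_mono[OF finD, of "vB ` {..<k} \<union> f ` {..<k}"] by simp
qed

definition D0 :: "nat \<Rightarrow> nat set" where "D0 k = vA ` {..<k} \<union> vB ` {..<k}"

lemma td_D0: assumes "k \<ge> 1" shows "total_dominating (Tr k) (D0 k)"
  unfolding total_dominating_def verts_Tr
proof (intro conjI ballI)
  show "D0 k \<subseteq> Vs k" by (auto simp: D0_def Vs_def)
  fix v assume "v \<in> Vs k"
  then consider "v = 0" | i where "i < k" "v = vA i" | i where "i < k" "v = vB i"
    | i where "i < k" "v = vX i" unfolding Vs_def by auto
  then show "\<exists>d\<in>D0 k. adj (Tr k) v d"
  proof cases
    case 1 then show ?thesis using assms by (intro bexI[of _ "vA 0"]) (auto simp: adj_0 D0_def)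
  next
    case (2 i) then show ?thesis by (intro bexI[of _ "vB i"]) (auto simp: adj_A D0_def)
  next
    case (3 i) then show ?thesis by (intro bexI[of _ "vA i"]) (auto simp: adj_B D0_def)
  next
    case (4 i) then show ?thesis by (intro bexI[of _ "vB i"]) (auto simp: adj_X D0_def)
  qed
qed

lemma card_D0: "card (D0 k) = 2 * k"
proof -
  have injA: "inj_on vA {..<k}" by (rule inj_onI) simp
  have injB: "inj_on vB {..<k}" by (rule inj_onI) simp
  have disj: "vA ` {..<k} \<inter> vB ` {..<k} = {}" by auto
  show ?thesis unfolding D0_def
    using card_Un_disjoint[OF _ _ disj] card_image[OF injA] card_image[OF injB] by simp
qed

lemma gamma_Tr: assumes "k \<ge> 1" shows "total_domination_number (Tr k) = 2 * k"
  unfolding total_domination_number_def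
proof (rule Min_eqI)
  have "{D. total_dominating (Tr k) D} \<subseteq> Pow (Vs k)"
    by (auto simp: total_dominating_def verts_Tr)
  then show "finite (card ` {D. total_dominating (Tr k) D})"
    using finite_Vs by (meson finite_Pow_iff finite_imageI finite_subset)
  show "\<And>y. y \<in> card ` {D. total_dominating (Tr k) D} \<Longrightarrow> 2 * k \<le> y"
    using td_lower by blast
  show "2 * k \<in> card ` {D. total_dominating (Tr k) D}"
    using td_D0[OF assms] card_D0 by (metis (mono_tags, lifting) image_eqI mem_Collect_eq)
qed

definition P0 :: "nat \<Rightarrow> nat set set" where
  "P0 k = (\<lambda>i. {vX i, vB i}) ` {..<k} \<union> {vA ` {..<k}, {0}}"

lemma P0_part: assumes "k \<ge> 1" shows "is_partition_of (P0 k) (Vs k)"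
  unfolding is_partition_of_def
proof (intro conjI ballI impI)
  show "\<Union> (P0 k) = Vs k" by (auto simp: P0_def Vs_def)
  have "0 \<in> {..<k}" using assms by simp
  then have "vA ` {..<k} \<noteq> {}" by blast
  then show "{} \<notin> P0 k" by (auto simp: P0_def)
  fix A B assume A: "A \<in> P0 k" and B: "B \<in> P0 k" and ne: "A \<noteq> B"
  show "A \<inter> B = {}"
    using A B ne by (auto simp: P0_def)
qed

lemma P0_mv: assumes "M \<in> P0 k" shows "dist2_mv_set (Tr k) M"
  unfolding dist2_mv_set_def
proof (intro conjI ballI)
  show "M \<subseteq> verts (Tr k)" using assms by (auto simp: P0_def verts_Tr Vs_def)
  fix u v assume u: "u \<in> M" and v: "v \<in> M"
  have uv: "u \<in> verts (Tr k)" "v \<in> verts (Tr k)" using u v assms by (auto simp: P0_def verts_Tr Vs_def)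
  have "u = v \<or> adj (Tr k) u v \<or> (\<not> adj (Tr k) u v \<and> u \<noteq> v \<and>
      (\<exists>w. w \<notin> M \<and> adj (Tr k) u w \<and> adj (Tr k) w v \<and> w \<in> verts (Tr k)))"
    using assms unfolding P0_def
  proof (elim UnE imageE insertE)
    fix i assume i: "i \<in> {..<k}" and M: "M = {vX i, vB i}"
    then show ?thesis using u v adj_X[of i k] adj_B[of i k] i by auto
  next
    assume M: "M = vA ` {..<k}"
    then obtain i j where ij: "i < k" "j < k" "u = vA i" "v = vA j" using u v by auto
    show ?thesis
    proof (cases "i = j")
      case True then show ?thesis using ij by simp
    next
      case False
      have "adj (Tr k) u 0" "adj (Tr k) 0 v" using ij by (auto simp: adj_A adj_0)
      moreover have "\<not> adj (Tr k) u v" using ij adj_A by auto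
      moreover have "0 \<notin> M" "0 \<in> verts (Tr k)" using M by (auto simp: verts_Tr Vs_def)
      ultimately show ?thesis using ij False by blast
    qed
  next
    assume "M = {0}" then show ?thesis using u v by simp
  next
    assume "M \<in> {}" then show ?thesis by simp
  qed
  then show "\<exists>xs. shortest_path (Tr k) u v xs \<and> path_len xs \<le> 2 \<and> internal_verts xs \<inter> M = {}"
    using mv_pair[OF uv] by blast
qed

lemma card_P0: assumes "k \<ge> 1" shows "card (P0 k) = k + 2"
proof -
  have inj: "inj_on (\<lambda>i. {vX i, vB i}) {..<k}" by (rule inj_onI) (auto simp: doubleton_eq_iff)
  have a: "vA ` {..<k} \<notin> (\<lambda>i. {vX i, vB i}) ` {..<k}"
  proof
    assume "vA ` {..<k} \<in> (\<lambda>i. {vX i, vB i}) ` {..<k}"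
    then obtain i where "vA ` {..<k} = {vX i, vB i}" by auto
    moreover have "vA 0 \<in> vA ` {..<k}" using assms by auto
    ultimately show False by auto
  qed
  have b: "{0} \<notin> (\<lambda>i. {vX i, vB i}) ` {..<k}" by auto
  have c: "{0} \<noteq> vA ` {..<k}"
  proof
    assume "{0} = vA ` {..<k}"
    moreover have "vA 0 \<in> vA ` {..<k}" using assms by auto
    ultimately show False by (metis singletonD v_inj(10))
  qed
  have "P0 k = insert (vA ` {..<k}) (insert {0} ((\<lambda>i. {vX i, vB i}) ` {..<k}))"
    by (auto simp: P0_def)
  then show ?thesis using a b c card_image[OF inj] by simp
qed

lemma chi_lower:
  assumes k3: "k \<ge> 3" and part: "is_partition_of P (Vs k)"
    and mv: "\<forall>M\<in>P. dist2_mv_set (Tr k) M"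
  shows "k + 2 \<le> card P"
proof -
  have U: "\<Union>P = Vs k" and disj: "\<And>A B. A \<in> P \<Longrightarrow> B \<in> P \<Longrightarrow> A \<noteq> B \<Longrightarrow> A \<inter> B = {}"
    using part unfolding is_partition_of_def by auto
  have finP: "finite P"
  proof -
    have "P \<subseteq> Pow (Vs k)" using U by auto
    then show ?thesis using finite_Vs by (meson finite_Pow_iff finite_subset)
  qed
  define cls where "cls v = (SOME M. M \<in> P \<and> v \<in> M)" for v
  have cls_in: "cls v \<in> P \<and> v \<in> cls v" if "v \<in> Vs k" for v
  proof -
    have "\<exists>M. M \<in> P \<and> v \<in> M" using that U by auto
    then show ?thesis unfolding cls_def by (rule someI_ex)
  qed
  have close: "u = v \<or> adj (Tr k) u v \<or> (\<exists>w. w \<notin> cls u \<and> adj (Tr k) u w \<and> adj (Tr k) w v)"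
    if "u \<in> Vs k" "v \<in> Vs k" "cls u = cls v" for u v
  proof -
    have "dist2_mv_set (Tr k) (cls u)" using mv cls_in[OF that(1)] by blast
    then show ?thesis using mv_close[of "Tr k" "cls u" u v] cls_in[OF that(1)] cls_in[OF that(2)] that(3)
      by auto
  qed
  have VA: "vA i \<in> Vs k" and VB: "vB i \<in> Vs k" and VX: "vX i \<in> Vs k" if "i < k" for i
    using that by (auto simp: Vs_def)
  have V0: "0 \<in> Vs k" by (simp add: Vs_def)
  have a: "i = j" if "i < k" "j < k" "cls (vX i) = cls (vX j)" for i j
    using close[OF VX[OF that(1)] VX[OF that(2)] that(3)] adj_X[OF that(1)] adj_B[OF that(1)] by auto
  have b: "cls 0 \<noteq> cls (vX i)" if "i < k" for i
  proof
    assume "cls 0 = cls (vX i)"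
    from close[OF V0 VX[OF that] this] show False
      using adj_0[of k] adj_A by fastforce
  qed
  define S where "S = insert (cls 0) ((cls \<circ> vX) ` {..<k})"
  have injS: "inj_on (cls \<circ> vX) {..<k}" by (rule inj_onI) (use a in auto)
  have cardS: "card S = k + 1"
  proof -
    have "cls 0 \<notin> (cls \<circ> vX) ` {..<k}" using b by auto
    then show ?thesis unfolding S_def using card_image[OF injS] by simp
  qed
  have SP: "S \<subseteq> P" unfolding S_def using cls_in VX V0 by auto
  have "\<exists>v\<in>Vs k. cls v \<notin> S"
  proof (rule ccontr)
    assume "\<not> ?thesis"
    then have allS: "cls v \<in> S" if "v \<in> Vs k" for v using that by blast
    have c: "cls (vA i) = cls 0 \<or> cls (vB i) = cls 0" if i: "i < k" for i
    proof (rule ccontr)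
      assume n: "\<not> ?thesis"
      obtain j where j: "j < k" "cls (vA i) = cls (vX j)" using allS[OF VA[OF i]] n unfolding S_def by auto
      have "j = i"
        using close[OF VA[OF i] VX[OF j(1)] j(2)] adj_A[OF i] adj_B[OF i] adj_0[of k] adj_X by auto
      obtain j' where j': "j' < k" "cls (vB i) = cls (vX j')" using allS[OF VB[OF i]] n unfolding S_def by auto
      have "j' = i"
        using close[OF VB[OF i] VX[OF j'(1)] j'(2)] adj_A[OF i] adj_B[OF i] adj_X[OF i] by auto
      have eqA: "cls (vX i) = cls (vA i)" using j \<open>j = i\<close> by simp
      have "vB i \<in> cls (vX i)" using j' \<open>j' = i\<close> cls_in[OF VB[OF i]] by simp
      then show False using close[OF VX[OF i] VA[OF i] eqA] adj_X[OF i] by auto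
    qed
    have bb: "False" if "i < k" "j < k" "i \<noteq> j" "cls (vB i) = cls 0" "cls (vB j) = cls 0" for i j
    proof -
      have "cls (vB i) = cls (vB j)" using that by simp
      from close[OF VB[OF that(1)] VB[OF that(2)] this] show False
        using adj_B[OF that(1)] adj_A[OF that(1)] adj_X[OF that(1)] that(3) by auto
    qed
    have aa: "False" if "i < k" "j < k" "i \<noteq> j" "cls (vA i) = cls 0" "cls (vA j) = cls 0" for i j
    proof -
      have "cls (vA i) = cls (vA j)" using that by simp
      moreover have "0 \<in> cls (vA i)" using that(4) cls_in[OF V0] by simp
      ultimately show False using close[OF VA[OF that(1)] VA[OF that(2)]]
        using adj_B[OF that(1)] adj_A[OF that(1)] that(3) by auto
    qed
    have k012: "0 < k" "1 < k" "2 < k" using k3 by auto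
    show False
      using c[OF k012(1)] c[OF k012(2)] c[OF k012(3)]
        aa[OF k012(1) k012(2)] aa[OF k012(1) k012(3)] aa[OF k012(2) k012(3)]
        bb[OF k012(1) k012(2)] bb[OF k012(1) k012(3)] bb[OF k012(2) k012(3)]
      by auto
  qed
  then obtain v where v: "v \<in> Vs k" "cls v \<notin> S" by blast
  have "insert (cls v) S \<subseteq> P" using SP cls_in[OF v(1)] by auto
  then have "card (insert (cls v) S) \<le> card P" using card_mono[OF finP] by blast
  moreover have "card (insert (cls v) S) = k + 2"
    using v(2) cardS finite_subset[OF SP finP] by simp
  ultimately show ?thesis by simp
qed

lemma part_Pow: "is_partition_of P V \<Longrightarrow> P \<subseteq> Pow V"
  unfolding is_partition_of_def by blast

lemma chi_Tr: assumes "k \<ge> 3" shows "chi_mu2 (Tr k) = k + 2"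
proof -
  define Q where "Q = {P. is_partition_of P (Vs k) \<and> (\<forall>M\<in>P. dist2_mv_set (Tr k) M)}"
  have sub: "Q \<subseteq> Pow (Pow (Vs k))" unfolding Q_def using part_Pow by blast
  have fin: "finite (card ` Q)"
    by (rule finite_imageI[OF finite_subset[OF sub]]) (simp add: finite_Vs)
  have lo: "k + 2 \<le> y" if "y \<in> card ` Q" for y
  proof -
    from that obtain P where P: "y = card P" "P \<in> Q" by blast
    then have "is_partition_of P (Vs k)" "\<forall>M\<in>P. dist2_mv_set (Tr k) M" unfolding Q_def by auto
    then have "k + 2 \<le> card P" by (rule chi_lower[OF assms])
    then show ?thesis using P by simp
  qed
  have k1: "k \<ge> 1" using assms by simp
  have "P0 k \<in> Q" unfolding Q_def using P0_part[OF k1] P0_mv by blast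
  then have mem: "k + 2 \<in> card ` Q" using card_P0[OF k1] by (metis image_eqI)
  have "Min (card ` Q) = k + 2" by (rule Min_eqI[OF fin lo mem])
  then show ?thesis unfolding chi_mu2_def verts_Tr Q_def .
qed

theorem mainTheorem8:
  fixes l :: nat
  assumes "l \<ge> 1"
  shows "\<exists>T :: nat graph. is_tree T \<and> (\<exists>D. total_dominating T D) \<and>
           int (total_domination_number T) - int (chi_mu2 T) = int l"
proof (rule exI[of _ "Tr (l + 2)"], intro conjI)
  let ?k = "l + 2"
  show "is_tree (Tr ?k)" by (rule tree_Tr)
  show "\<exists>D. total_dominating (Tr ?k) D" using td_D0[of ?k] by auto
  show "int (total_domination_number (Tr ?k)) - int (chi_mu2 (Tr ?k)) = int l"
  proof -
    have "total_domination_number (Tr ?k) = 2 * ?k" using gamma_Tr[of ?k] by simp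
    moreover have "chi_mu2 (Tr ?k) = ?k + 2" using chi_Tr[of ?k] assms by simp
    ultimately show ?thesis by simp
  qed
qed
end
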